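(* Let $\mathcal{X}$ be a hereditary class above the Bell number with finite distinguishing number $k_{\mathcal{X}}$, and let $\ell_{\mathcal{X}},d_{\mathcal{X}},c_{\mathcal{X}}$ be constants such that every $G\in\mathcal{X}$ contains an induced subgraph $G'$ which is a strong $(\ell_{\mathcal{X}},d_{\mathcal{X}})$-graph with $|V(G)\setminus V(G')|<c_{\mathcal{X}}$ (such constants exist whenever $k_{\mathcal{X}}<\infty$). Then $\mathcal{X}\supseteq\mathcal{P}(w,H)$ for some infinite almost periodic word $w$ and some graph $H$ with loops allowed, of order at most $\ell_{\mathcal{X}}$, on the alphabet of $w$.
   Context: Graphs in classes are finite, simple, loopless; hereditary = closed under induced subgraphs and isomorphism. Speed $\mathcal{X}_n$: number of graphs in $\mathcal{X}$ on vertex set $\{1,\dots,n\}$. Above the Bell number: $\mathcal{X}_n\ge n^{(1-o(1))n}$ (equivalently speed at least the Bell number $B_n$). Distinguishing number: for $X\subseteq V(G)$, disjoint sets $U_1,\dots,U_m$ are distinguished by $X$ if vertices of the same $U_i$ have the same neighbourhood in $X$ and vertices in different $U_i$ have different neighbourhoods in $X$. $k_{\mathcal{X}}=\infty$ if for all $k,m$ some $G\in\mathcal{X}$ and $X\subseteq V(G)$ distinguish at least $m$ sets of size at least $k$; otherwise $k_{\mathcal{X}}$ is the least $k$ such that for some $m$, no vertex subset of a graph in $\mathcal{X}$ distinguishes more than $m$ sets of size at least $k$. $(\ell,d)$-graphs: for $U,W\subseteq V(G)$ let $\Delta(U,W)=\max\{|N(u)\cap W|,|N(w)\cap U|:u\in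 U,w\in W\}$ and $\overline{\Delta}(U,W)$ the same with $\overline N(x)=V(G)\setminus(N(x)\cup\{x\})$ in place of $N(x)$. A partition $\{V_1,\dots,V_{\ell'}\}$ of $V(G)$ is an $(\ell,d)$-partition if $\ell'\le\ell$ and for all (not necessarily distinct) $i,j$, $\Delta(V_i,V_j)\le d$ or $\overline\Delta(V_i,V_j)\le d$. It is strong if each bag has at least $5\cdot 2^{\ell}d$ vertices; a strong $(\ell,d)$-graph is one admitting a strong $(\ell,d)$-partition. Words: maps $w:S\to A$, $S=\{1,\dots,n\}$ or $\mathbb{N}$, $A$ finite; a factor of $w$ is a word $f$ with $f_i=w_{i+s}$ for some fixed $s\ge0$. Infinite $w$ is almost periodic if for each factor $f$ there is $k_f$ such that every factor of length $\ge k_f$ contains $f$. For $H$ with loops allowed on $A$ and $u_1<\dots<u_m$ positive integers, $G_{w,H}(u_1,\dots,u_m)$ has vertex set $\{u_i\}$ and $u_iu_j$ is an edge iff ($|u_i-u_j|=1$ and $w_{u_i}w_{u_j}\notin E(H)$) or ($|u_i-u_j|>1$ and $w_{u_i}w_{u_j}\in E(H)$), loops of $H$ accounting for equal letters. $\mathcal{P}(w,H)$ is the class of graphs isomorphic to some $G_{w,H}(u_1,\dots,u_m)$. *)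

theory Defs
  imports Complex_Main
begin

type_synonym graph = "nat set \<times> (nat \<Rightarrow> nat \<Rightarrow> bool)"

definition verts :: "graph \<Rightarrow> nat set" where "verts G = fst G"
definition adj :: "graph \<Rightarrow> nat \<Rightarrow> nat \<Rightarrow> bool" where "adj G = snd G"

definition wf_graph :: "graph \<Rightarrow> bool" where
  "wf_graph G \<longleftrightarrow> finite (verts G)
     \<and> (\<forall>x y. adj G x y \<longrightarrow> x \<in> verts G \<and> y \<in> verts G)
     \<and> (\<forall>x y. adj G x y \<longleftrightarrow> adj G y x)
     \<and> (\<forall>x. \<not> adj G x x)"

definition nbhd :: "graph \<Rightarrow> nat \<Rightarrow> nat set" where
  "nbhd G x = {y \<in> verts G. adj G x y}"

definition conbhd :: "graph \<Rightarrow> nat \<Rightarrow> nat set" where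
  "conbhd G x = verts G - (nbhd G x \<union> {x})"

definition induced :: "graph \<Rightarrow> nat set \<Rightarrow> graph" where
  "induced G S = (S \<inter> verts G, \<lambda>x y. x \<in> S \<and> y \<in> S \<and> adj G x y)"

definition graph_iso :: "graph \<Rightarrow> graph \<Rightarrow> bool" where
  "graph_iso G G' \<longleftrightarrow> (\<exists>f. bij_betw f (verts G) (verts G')
       \<and> (\<forall>x\<in>verts G. \<forall>y\<in>verts G. adj G x y \<longleftrightarrow> adj G' (f x) (f y)))"

definition hereditary :: "graph set \<Rightarrow> bool" where
  "hereditary \<X> \<longleftrightarrow> (\<forall>G\<in>\<X>. wf_graph G)
     \<and> (\<forall>G\<in>\<X>. \<forall>S. S \<subseteq> verts G \<longrightarrow> induced G S \<in> \<X>)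
     \<and> (\<forall>G\<in>\<X>. \<forall>G'. wf_graph G' \<and> graph_iso G G' \<longrightarrow> G' \<in> \<X>)"

definition speed :: "graph set \<Rightarrow> nat \<Rightarrow> nat" where
  "speed \<X> n = card {E. ({1..n}, E) \<in> \<X>}"

definition above_bell :: "graph set \<Rightarrow> bool" where
  "above_bell \<X> \<longleftrightarrow> (\<forall>\<epsilon>::real. \<epsilon> > 0 \<longrightarrow>
     (\<forall>\<^sub>F n in sequentially. real (speed \<X> n) \<ge> real n powr ((1 - \<epsilon>) * real n)))"

definition distinguishes :: "graph \<Rightarrow> nat set \<Rightarrow> nat set set \<Rightarrow> bool" where
  "distinguishes G X \<U> \<longleftrightarrow> X \<subseteq> verts G
     \<and> (\<forall>U\<in>\<U>. U \<subseteq> verts G)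
     \<and> (\<forall>U\<in>\<U>. \<forall>U'\<in>\<U>. U \<noteq> U' \<longrightarrow> U \<inter> U' = {})
     \<and> (\<forall>U\<in>\<U>. \<forall>u\<in>U. \<forall>v\<in>U. nbhd G u \<inter> X = nbhd G v \<inter> X)
     \<and> (\<forall>U\<in>\<U>. \<forall>U'\<in>\<U>. U \<noteq> U' \<longrightarrow>
          (\<forall>u\<in>U. \<forall>v\<in>U'. nbhd G u \<inter> X \<noteq> nbhd G v \<inter> X))"

definition finite_distinguishing_number :: "graph set \<Rightarrow> bool" where
  "finite_distinguishing_number \<X> \<longleftrightarrow> (\<exists>k m::nat. \<forall>G\<in>\<X>. \<forall>X \<U>.
      distinguishes G X \<U> \<and> (\<forall>U\<in>\<U>. card U \<ge> k) \<longrightarrow> card \<U> \<le> m)"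

definition Delta_le :: "graph \<Rightarrow> nat set \<Rightarrow> nat set \<Rightarrow> nat \<Rightarrow> bool" where
  "Delta_le G U W d \<longleftrightarrow> (\<forall>u\<in>U. card (nbhd G u \<inter> W) \<le> d)
                       \<and> (\<forall>w\<in>W. card (nbhd G w \<inter> U) \<le> d)"

definition coDelta_le :: "graph \<Rightarrow> nat set \<Rightarrow> nat set \<Rightarrow> nat \<Rightarrow> bool" where
  "coDelta_le G U W d \<longleftrightarrow> (\<forall>u\<in>U. card (conbhd G u \<inter> W) \<le> d)
                         \<and> (\<forall>w\<in>W. card (conbhd G w \<inter> U) \<le> d)"

definition ld_partition :: "graph \<Rightarrow> nat \<Rightarrow> nat \<Rightarrow> nat set set \<Rightarrow> bool" where
  "ld_partition G l d P \<longleftrightarrow> \<Union>P = verts G \<and> {} \<notin> P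
     \<and> (\<forall>A\<in>P. \<forall>B\<in>P. A \<noteq> B \<longrightarrow> A \<inter> B = {})
     \<and> card P \<le> l
     \<and> (\<forall>A\<in>P. \<forall>B\<in>P. Delta_le G A B d \<or> coDelta_le G A B d)"

definition strong_ld_graph :: "graph \<Rightarrow> nat \<Rightarrow> nat \<Rightarrow> bool" where
  "strong_ld_graph G l d \<longleftrightarrow> (\<exists>P. ld_partition G l d P
       \<and> (\<forall>A\<in>P. card A \<ge> 5 * 2 ^ l * d))"

text \<open>Words: infinite word w indexed by positive integers (w 0 is irrelevant).
  Finite factors are lists.\<close>
definition is_factor :: "(nat \<Rightarrow> 'a) \<Rightarrow> 'a list \<Rightarrow> bool" where
  "is_factor w f \<longleftrightarrow> (\<exists>s. \<forall>i<length f. f ! i = w (i + 1 + s))"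

definition contains_factor :: "'a list \<Rightarrow> 'a list \<Rightarrow> bool" where
  "contains_factor g f \<longleftrightarrow> (\<exists>t. t + length f \<le> length g \<and> (\<forall>i<length f. f ! i = g ! (i + t)))"

definition almost_periodic :: "(nat \<Rightarrow> 'a) \<Rightarrow> bool" where
  "almost_periodic w \<longleftrightarrow> (\<forall>f. is_factor w f \<longrightarrow>
     (\<exists>k. \<forall>g. is_factor w g \<and> length g \<ge> k \<longrightarrow> contains_factor g f))"

definition GwH :: "(nat \<Rightarrow> 'a) \<Rightarrow> ('a \<Rightarrow> 'a \<Rightarrow> bool) \<Rightarrow> nat set \<Rightarrow> graph" where
  "GwH w H U = (U, \<lambda>x y. x \<in> U \<and> y \<in> U \<and> x \<noteq> y \<and>
      ((dist (real x) (real y) = 1 \<and> \<not> H (w x) (w y)) \<or>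
       (dist (real x) (real y) > 1 \<and> H (w x) (w y))))"

definition P_class :: "(nat \<Rightarrow> 'a) \<Rightarrow> ('a \<Rightarrow> 'a \<Rightarrow> bool) \<Rightarrow> graph set" where
  "P_class w H = {G. wf_graph G \<and> (\<exists>U. finite U \<and> 0 \<notin> U \<and> graph_iso (GwH w H U) G)}"

end

theory Submission
  imports Defs "HOL-Library.FuncSet"
begin

definition facx :: "(nat \<Rightarrow> 'a) \<Rightarrow> 'a list set" where
  "facx x = {map (\<lambda>i. x (s+i)) [0..<n] | s n. True}"

definition fclosed :: "'a list set \<Rightarrow> bool" where
  "fclosed L \<longleftrightarrow> (\<forall>g f. g \<in> L \<and> contains_factor g f \<longrightarrow> f \<in> L)"

definition longw :: "'a list set \<Rightarrow> bool" where
  "longw L \<longleftrightarrow> (\<forall>n. \<exists>v\<in>L. n \<le> length v)"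

lemma contains_factor_take_drop: "contains_factor g (take n (drop t g))"
  unfolding contains_factor_def
  by (rule exI[of _ "min t (length g)"]) (auto simp: add.commute)

lemma fclosed_prefix: "fclosed L \<Longrightarrow> v @ u \<in> L \<Longrightarrow> v \<in> L"
  unfolding fclosed_def using contains_factor_take_drop[where n="length v" and t=0 and g="v@u"] by auto

lemma konig:
  assumes A: "finite A" and fc: "fclosed L" and lg: "longw L" and al: "\<forall>v\<in>L. set v \<subseteq> A"
  shows "\<exists>x. facx x \<subseteq> L \<and> range x \<subseteq> A"
proof -
  define good where "good v \<longleftrightarrow> (\<forall>n. \<exists>u. n \<le> length u \<and> v @ u \<in> L)" for v
  have g0: "good []" using lg unfolding good_def longw_def by auto
  have gstep: "\<exists>a\<in>A. good (v @ [a])" if gv: "good v" for v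
  proof (rule ccontr)
    assume "\<not> ?thesis"
    then have "\<forall>a\<in>A. \<exists>n. \<forall>u. n \<le> length u \<longrightarrow> v @ [a] @ u \<notin> L"
      unfolding good_def by auto
    then obtain nf where nf: "\<And>a u. a \<in> A \<Longrightarrow> nf a \<le> length u \<Longrightarrow> v @ [a] @ u \<notin> L"
      by metis
    define n where "n = Suc (Max (nf ` A \<union> {0}))"
    obtain u where u: "n \<le> length u" "v @ u \<in> L" using gv unfolding good_def by blast
    then obtain a u' where au: "u = a # u'" by (cases u) (auto simp: n_def)
    have "a \<in> A" using al u au by auto
    moreover have "nf a \<le> length u'"
    proof -
      have "nf a \<le> Max (nf ` A \<union> {0})" using \<open>a\<in>A\<close> A by (intro Max_ge) auto
      then show ?thesis using u au unfolding n_def by simp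
    qed
    ultimately show False using nf u au by auto
  qed
  define nxt where "nxt v = (SOME a. a \<in> A \<and> good (v @ [a]))" for v
  have nxt: "good v \<Longrightarrow> nxt v \<in> A \<and> good (v @ [nxt v])" for v
    unfolding nxt_def using gstep[of v] by (metis (mono_tags, lifting) someI_ex)
  define pre where "pre = rec_nat [] (\<lambda>_ v. v @ [nxt v])"
  have pre0: "pre 0 = []" and preS: "pre (Suc k) = pre k @ [nxt (pre k)]" for k
    unfolding pre_def by auto
  have gpre: "good (pre k)" for k
    by (induction k) (use g0 nxt in \<open>auto simp: pre0 preS\<close>)
  define x where "x i = nxt (pre i)" for i
  have prex: "pre k = map x [0..<k]" for k
    by (induction k) (auto simp: pre0 preS x_def)
  have preL: "pre k \<in> L" for k
    using gpre[of k] fclosed_prefix[OF fc] unfolding good_def by blast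
  have "map (\<lambda>i. x (s+i)) [0..<n] \<in> L" for s n
  proof -
    have "map (\<lambda>i. x (s+i)) [0..<n] = take n (drop s (pre (s+n)))"
      unfolding prex by (simp add: drop_map take_map map_add_upt[symmetric] add.commute)
    then show ?thesis using fc preL[of "s+n"] contains_factor_take_drop unfolding fclosed_def by metis
  qed
  then have "facx x \<subseteq> L" unfolding facx_def by auto
  moreover have "range x \<subseteq> A" using nxt gpre unfolding x_def by auto
  ultimately show ?thesis by blast
qed

lemma contains_factor_trans:
  assumes "contains_factor g h" "contains_factor h f" shows "contains_factor g f"
proof -
  obtain t1 where t1: "t1 + length h \<le> length g" "\<forall>i<length h. h ! i = g ! (i + t1)"
    using assms(1) unfolding contains_factor_def by blast
  obtain t2 where t2: "t2 + length f \<le> length h" "\<forall>i<length f. f ! i = h ! (i + t2)"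
    using assms(2) unfolding contains_factor_def by blast
  show ?thesis unfolding contains_factor_def
    by (rule exI[of _ "t2+t1"]) (use t1 t2 in \<open>auto simp: add.assoc\<close>)
qed

lemma contains_factor_refl: "contains_factor f f"
  unfolding contains_factor_def by auto

lemma facx_iff: "f \<in> facx x \<longleftrightarrow> (\<exists>s. \<forall>i<length f. f ! i = x (s + i))"
proof
  assume "f \<in> facx x" then show "\<exists>s. \<forall>i<length f. f ! i = x (s + i)"
    unfolding facx_def by auto
next
  assume "\<exists>s. \<forall>i<length f. f ! i = x (s + i)"
  then obtain s where s: "\<forall>i<length f. f ! i = x (s + i)" by blast
  have "f = map (\<lambda>i. x (s+i)) [0..<length f]"
    by (rule nth_equalityI) (use s in auto)
  then show "f \<in> facx x" unfolding facx_def by blast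
qed

lemma fclosed_facx: "fclosed (facx x)"
  unfolding fclosed_def
proof (intro allI impI, elim conjE)
  fix g f assume g: "g \<in> facx x" and c: "contains_factor g f"
  obtain s where s: "\<forall>i<length g. g ! i = x (s + i)" using g facx_iff by blast
  obtain t where t: "t + length f \<le> length g" "\<forall>i<length f. f ! i = g ! (i + t)"
    using c unfolding contains_factor_def by blast
  have "\<forall>i<length f. f ! i = x ((s+t) + i)" using s t by (auto simp: add_ac)
  then show "f \<in> facx x" using facx_iff by blast
qed

lemma facx_len: "\<exists>v\<in>facx x. length v = n"
  by (rule bexI[of _ "map x [0..<n]"]) (auto simp: facx_iff intro: exI[of _ 0])

lemma minimal_exists:
  assumes A: "finite A" and fc: "fclosed L" and lg: "longw L" and al: "\<forall>v\<in>L. set v \<subseteq> A"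
  shows "\<exists>y. facx y \<subseteq> L \<and> range y \<subseteq> A \<and> (\<forall>z. facx z \<subseteq> facx y \<longrightarrow> facx z = facx y)"
proof -
  define \<Omega> where "\<Omega> = {facx x | x. facx x \<subseteq> L}"
  define A' where "A' = uminus ` \<Omega>"
  have "\<forall>C\<in>chains A'. \<exists>U\<in>A'. \<forall>X\<in>C. X \<subseteq> U"
  proof
    fix C assume C: "C \<in> chains A'"
    define C' where "C' = uminus ` C"
    have C'O: "C' \<subseteq> \<Omega>" using C unfolding chains_def C'_def A'_def by auto
    have ch: "\<forall>F\<in>C'. \<forall>F'\<in>C'. F \<subseteq> F' \<or> F' \<subseteq> F"
      using C unfolding chains_def chain_subset_def C'_def by auto
    define M where "M = L \<inter> \<Inter>C'"
    have fcM: "fclosed M"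
    proof -
      have "\<forall>F\<in>C'. fclosed F" using C'O fclosed_facx unfolding \<Omega>_def by auto
      then show ?thesis using fc unfolding fclosed_def M_def by blast
    qed
    have lgM: "longw M" unfolding longw_def
    proof
      fix n
      show "\<exists>v\<in>M. n \<le> length v"
      proof (cases "C' = {}")
        case True then show ?thesis using lg unfolding M_def longw_def by auto
      next
        case False
        define W where "W F = {v\<in>F. length v = n}" for F :: "'a list set"
        have Wne: "W F \<noteq> {}" if FC: "F \<in> C'" for F
        proof -
          obtain x where "F = facx x" using FC C'O unfolding \<Omega>_def by blast
          then show ?thesis using facx_len[of x n] unfolding W_def by blast
        qed
        have Wfin: "finite (W F)" if "F \<in> C'" for F
        proof -
          have "W F \<subseteq> {v. set v \<subseteq> A \<and> length v = n}" using that C'O al unfolding \<Omega>_def W_def by auto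
          then show ?thesis using finite_lists_length_eq[OF A] finite_subset by blast
        qed
        obtain F0 where F0: "F0 \<in> C'" "\<forall>F\<in>C'. card (W F0) \<le> card (W F)"
        proof -
          obtain F1 where "F1 \<in> C'" using False by blast
          from ex_has_least_nat[of "\<lambda>F. F \<in> C'", OF this, of "\<lambda>F. card (W F)"]
          show ?thesis using that by blast
        qed
        have sub: "W F0 \<subseteq> W F" if "F \<in> C'" for F
        proof (cases "F0 \<subseteq> F")
          case True then show ?thesis unfolding W_def by auto
        next
          case False
          then have "F \<subseteq> F0" using ch F0 that by blast
          then have "W F \<subseteq> W F0" unfolding W_def by auto
          moreover have "card (W F0) \<le> card (W F)" using F0 that by auto
          moreover have "card (W F) \<le> card (W F0)" using card_mono[OF Wfin[OF F0(1)]] \<open>W F \<subseteq> W F0\<close> by blast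
          ultimately have "W F = W F0" using card_subset_eq[OF Wfin[OF F0(1)]] by simp
          then show ?thesis by simp
        qed
        obtain v where v: "v \<in> W F0" using Wne[OF F0(1)] by blast
        have "v \<in> L" using v F0 C'O unfolding W_def \<Omega>_def by auto
        then have "v \<in> M" "length v = n" using v sub unfolding M_def W_def by auto
        then show ?thesis by auto
      qed
    qed
    have alM: "\<forall>v\<in>M. set v \<subseteq> A" using al unfolding M_def by auto
    obtain z where z: "facx z \<subseteq> M" using konig[OF A fcM lgM alM] by blast
    have "- facx z \<in> A'" using z unfolding A'_def \<Omega>_def M_def by auto
    moreover have "\<forall>X\<in>C. X \<subseteq> - facx z" using z unfolding M_def C'_def by auto
    ultimately show "\<exists>U\<in>A'. \<forall>X\<in>C. X \<subseteq> U" by blast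
  qed
  from Zorn_Lemma2[OF this] obtain M where M: "M \<in> A'" "\<forall>X\<in>A'. M \<subseteq> X \<longrightarrow> X = M" by blast
  then obtain y where y: "M = - facx y" "facx y \<subseteq> L" unfolding A'_def \<Omega>_def by auto
  have "range y \<subseteq> A"
  proof
    fix a assume "a \<in> range y" then obtain i where "a = y i" by auto
    then have "[a] \<in> facx y" unfolding facx_iff by (intro exI[of _ i]) auto
    then have "[a] \<in> L" using y by blast
    then show "a \<in> A" using al by fastforce
  qed
  moreover have "\<forall>z. facx z \<subseteq> facx y \<longrightarrow> facx z = facx y"
  proof (intro allI impI)
    fix z assume "facx z \<subseteq> facx y"
    then have "- facx z \<in> A'" "M \<subseteq> - facx z" using y unfolding A'_def \<Omega>_def by auto
    then have "- facx z = M" using M by blast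
    then show "facx z = facx y" using y by simp
  qed
  ultimately show ?thesis using y by blast
qed

lemma almost_periodic_exists:
  assumes A: "finite A" and fc: "fclosed L" and lg: "longw L" and al: "\<forall>v\<in>L. set v \<subseteq> A"
  shows "\<exists>y. facx y \<subseteq> L \<and> range y \<subseteq> A \<and> almost_periodic (\<lambda>i. y (i - 1))"
proof -
  obtain y where y: "facx y \<subseteq> L" "range y \<subseteq> A" "\<forall>z. facx z \<subseteq> facx y \<longrightarrow> facx z = facx y"
    using minimal_exists[OF assms] by blast
  have isf: "is_factor (\<lambda>i. y (i - 1)) f \<longleftrightarrow> f \<in> facx y" for f
    unfolding is_factor_def facx_iff by (simp add: add.commute)
  have "almost_periodic (\<lambda>i. y (i - 1))"
    unfolding almost_periodic_def isf
  proof (intro allI impI, rule ccontr)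
    fix f assume f: "f \<in> facx y" and nk: "\<nexists>k. \<forall>g. g \<in> facx y \<and> k \<le> length g \<longrightarrow> contains_factor g f"
    define M where "M = {g \<in> facx y. \<not> contains_factor g f}"
    have "fclosed M" unfolding fclosed_def
    proof (intro allI impI)
      fix g h assume gh: "g \<in> M \<and> contains_factor g h"
      then have g: "g \<in> facx y" "\<not> contains_factor g f" and c: "contains_factor g h"
        unfolding M_def by auto
      have "h \<in> facx y" using fclosed_facx[of y] g c unfolding fclosed_def by blast
      moreover have "\<not> contains_factor h f" using contains_factor_trans[OF c] g by blast
      ultimately show "h \<in> M" unfolding M_def by blast
    qed
    moreover have "longw M" unfolding longw_def
    proof
      fix n
      obtain g where "g \<in> facx y" "n \<le> length g" "\<not> contains_factor g f" using nk by auto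
      then show "\<exists>v\<in>M. n \<le> length v" unfolding M_def by auto
    qed
    moreover have "\<forall>v\<in>M. set v \<subseteq> A" using al y unfolding M_def by auto
    ultimately obtain z where z: "facx z \<subseteq> M" using konig[OF A, of M] by blast
    then have "facx z = facx y" using y unfolding M_def by auto
    then show False using z f contains_factor_refl unfolding M_def by blast
  qed
  then show ?thesis using y by blast
qed


definition realw :: "graph set \<Rightarrow> (nat \<Rightarrow> nat \<Rightarrow> bool) \<Rightarrow> nat list \<Rightarrow> bool" where
  "realw X H v \<longleftrightarrow> (\<exists>G\<in>X. \<exists>p. inj_on p {..<length v} \<and> p ` {..<length v} \<subseteq> verts G \<and>
     (\<forall>i<length v. \<forall>j<length v. i \<noteq> j \<longrightarrow>
        (adj G (p i) (p j) \<longleftrightarrow> ((i+1 = j \<or> j+1 = i) \<and> \<not> H (v!i) (v!j)) \<or>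
                               (\<not>(i+1 = j \<or> j+1 = i) \<and> H (v!i) (v!j)))))"

lemma fclosed_realw: "fclosed {v. set v \<subseteq> B \<and> realw X H v}"
  unfolding fclosed_def
proof (intro allI impI, elim conjE CollectE)
  fix g f assume gB: "set g \<subseteq> B" and rg: "realw X H g" and c: "contains_factor g f"
  obtain t where t: "t + length f \<le> length g" "\<forall>i<length f. f ! i = g ! (i + t)"
    using c unfolding contains_factor_def by blast
  obtain G p where G: "G \<in> X" "inj_on p {..<length g}" "p ` {..<length g} \<subseteq> verts G"
    "\<forall>i<length g. \<forall>j<length g. i \<noteq> j \<longrightarrow>
        (adj G (p i) (p j) \<longleftrightarrow> ((i+1 = j \<or> j+1 = i) \<and> \<not> H (g!i) (g!j)) \<or>
                               (\<not>(i+1 = j \<or> j+1 = i) \<and> H (g!i) (g!j)))"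
    using rg unfolding realw_def by blast
  have "set f \<subseteq> B"
  proof
    fix a assume "a \<in> set f"
    then obtain i where "i < length f" "a = f ! i" by (auto simp: in_set_conv_nth)
    then have "a = g ! (i + t)" "i + t < length g" using t by auto
    then show "a \<in> B" using gB by auto
  qed
  moreover have "realw X H f" unfolding realw_def
  proof (intro bexI[OF _ G(1)] exI[of _ "\<lambda>i. p (i + t)"] conjI)
    show "inj_on (\<lambda>i. p (i + t)) {..<length f}"
    proof
      fix a b assume "a \<in> {..<length f}" "b \<in> {..<length f}" "p (a + t) = p (b + t)"
      then have "a + t = b + t" using G(2) t(1) unfolding inj_on_def by (metis add_less_cancel_right lessThan_iff less_le_trans add.commute)
      then show "a = b" by simp
    qed
    show "(\<lambda>i. p (i + t)) ` {..<length f} \<subseteq> verts G" using G(3) t(1) by auto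
    show "\<forall>i<length f. \<forall>j<length f. i \<noteq> j \<longrightarrow>
        (adj G (p (i+t)) (p (j+t)) \<longleftrightarrow> ((i+1 = j \<or> j+1 = i) \<and> \<not> H (f!i) (f!j)) \<or>
                               (\<not>(i+1 = j \<or> j+1 = i) \<and> H (f!i) (f!j)))"
    proof (intro allI impI)
      fix i j assume ij: "i < length f" "j < length f" "i \<noteq> j"
      have "i + t < length g" "j + t < length g" "i + t \<noteq> j + t" using ij t by auto
      from G(4)[rule_format, OF this] show "(adj G (p (i+t)) (p (j+t)) \<longleftrightarrow> ((i+1 = j \<or> j+1 = i) \<and> \<not> H (f!i) (f!j)) \<or>
                               (\<not>(i+1 = j \<or> j+1 = i) \<and> H (f!i) (f!j)))"
        using t ij by auto
    qed
  qed
  ultimately show "f \<in> {v. set v \<subseteq> B \<and> realw X H v}" by blast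
qed

lemma graph_iso_sym: "graph_iso G G' \<Longrightarrow> graph_iso G' G"
  unfolding graph_iso_def
proof (elim exE conjE)
  fix f assume b: "bij_betw f (verts G) (verts G')"
    and a: "\<forall>x\<in>verts G. \<forall>y\<in>verts G. adj G x y = adj G' (f x) (f y)"
  define g where "g = inv_into (verts G) f"
  have bg: "bij_betw g (verts G') (verts G)" using b bij_betw_inv_into g_def by blast
  have "\<forall>x\<in>verts G'. \<forall>y\<in>verts G'. adj G' x y = adj G (g x) (g y)"
  proof (intro ballI)
    fix x y assume "x \<in> verts G'" "y \<in> verts G'"
    then have "f (g x) = x" "f (g y) = y" "g x \<in> verts G" "g y \<in> verts G"
      using b bg unfolding g_def by (auto simp: bij_betw_inv_into_right bij_betwE)
    then show "adj G' x y = adj G (g x) (g y)" using a by metis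
  qed
  then show "\<exists>f. bij_betw f (verts G') (verts G) \<and> (\<forall>x\<in>verts G'. \<forall>y\<in>verts G'. adj G' x y = adj G (f x) (f y))"
    using bg by blast
qed

lemma graph_iso_trans: "graph_iso G1 G2 \<Longrightarrow> graph_iso G2 G3 \<Longrightarrow> graph_iso G1 G3"
  unfolding graph_iso_def
proof (elim exE conjE)
  fix f g assume b1: "bij_betw f (verts G1) (verts G2)"
    and a1: "\<forall>x\<in>verts G1. \<forall>y\<in>verts G1. adj G1 x y = adj G2 (f x) (f y)"
    and b2: "bij_betw g (verts G2) (verts G3)"
    and a2: "\<forall>x\<in>verts G2. \<forall>y\<in>verts G2. adj G2 x y = adj G3 (g x) (g y)"
  have "bij_betw (g \<circ> f) (verts G1) (verts G3)" using b1 b2 bij_betw_trans by blast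
  moreover have "\<forall>x\<in>verts G1. \<forall>y\<in>verts G1. adj G1 x y = adj G3 ((g\<circ>f) x) ((g\<circ>f) y)"
  proof -
    have "\<forall>x\<in>verts G1. f x \<in> verts G2" using b1 bij_betwE by blast
    then show ?thesis using a1 a2 by auto
  qed
  ultimately show "\<exists>h. bij_betw h (verts G1) (verts G3) \<and> (\<forall>x\<in>verts G1. \<forall>y\<in>verts G1. adj G1 x y = adj G3 (h x) (h y))"
    by blast
qed

lemma pclass_sub:
  assumes her: "hereditary X" and fx: "facx y \<subseteq> {v. realw X H v}"
  shows "P_class (\<lambda>i. y (i - 1)) H \<subseteq> X"
proof
  fix G0 assume "G0 \<in> P_class (\<lambda>i. y (i - 1)) H"
  then obtain U where U: "wf_graph G0" "finite U" "0 \<notin> U" "graph_iso (GwH (\<lambda>i. y (i - 1)) H U) G0"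
    unfolding P_class_def by blast
  define M where "M = Max (insert 0 U)"
  have UM: "u \<in> U \<Longrightarrow> u - 1 < M \<and> 0 < u" for u
    using U(2,3) unfolding M_def by (metis Max_ge diff_less finite_insert insertCI le_neq_implies_less less_le_trans not_le zero_less_one gr0I)
  define v where "v = map y [0..<M]"
  have "v \<in> facx y" unfolding v_def facx_iff by (intro exI[of _ 0]) auto
  then obtain G p where G: "G \<in> X" "inj_on p {..<M}" "p ` {..<M} \<subseteq> verts G"
    "\<forall>i<M. \<forall>j<M. i \<noteq> j \<longrightarrow>
        (adj G (p i) (p j) \<longleftrightarrow> ((i+1 = j \<or> j+1 = i) \<and> \<not> H (v!i) (v!j)) \<or>
                               (\<not>(i+1 = j \<or> j+1 = i) \<and> H (v!i) (v!j)))"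
    using fx unfolding realw_def v_def by auto
  have wfG: "wf_graph G" using her G(1) unfolding hereditary_def by blast
  define \<phi> where "\<phi> u = p (u - 1)" for u
  define T where "T = \<phi> ` U"
  have Tsub: "T \<subseteq> verts G" using G(3) UM unfolding T_def \<phi>_def by auto
  have indX: "induced G T \<in> X" using her G(1) Tsub unfolding hereditary_def by blast
  have injphi: "inj_on \<phi> U"
  proof
    fix a b assume ab: "a \<in> U" "b \<in> U" "\<phi> a = \<phi> b"
    then have "a - 1 = b - 1" using G(2) UM unfolding \<phi>_def inj_on_def by auto
    moreover have "0 < a" "0 < b" using UM ab by auto
    ultimately show "a = b" by simp
  qed
  have vT: "verts (induced G T) = T" using Tsub unfolding induced_def verts_def by auto
  have "graph_iso (GwH (\<lambda>i. y (i - 1)) H U) (induced G T)"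
    unfolding graph_iso_def
  proof (intro exI[of _ \<phi>] conjI)
    show "bij_betw \<phi> (verts (GwH (\<lambda>i. y (i - 1)) H U)) (verts (induced G T))"
      using injphi vT unfolding GwH_def verts_def T_def bij_betw_def by simp
    show "\<forall>a\<in>verts (GwH (\<lambda>i. y (i - 1)) H U). \<forall>b\<in>verts (GwH (\<lambda>i. y (i - 1)) H U).
       adj (GwH (\<lambda>i. y (i - 1)) H U) a b = adj (induced G T) (\<phi> a) (\<phi> b)"
    proof (intro ballI)
      fix a b assume "a \<in> verts (GwH (\<lambda>i. y (i - 1)) H U)" "b \<in> verts (GwH (\<lambda>i. y (i - 1)) H U)"
      then have ab: "a \<in> U" "b \<in> U" unfolding GwH_def verts_def by auto
      have inT: "\<phi> a \<in> T" "\<phi> b \<in> T" using ab unfolding T_def by auto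
      show "adj (GwH (\<lambda>i. y (i - 1)) H U) a b = adj (induced G T) (\<phi> a) (\<phi> b)"
      proof (cases "a = b")
        case True
        then show ?thesis using wfG unfolding GwH_def adj_def induced_def wf_graph_def by auto
      next
        case False
        have i0: "a - 1 < M" "b - 1 < M" "0 < a" "0 < b" using UM ab by auto
        then have i: "a - 1 < M" "b - 1 < M" "a - 1 \<noteq> b - 1" "0 < a" "0 < b" using False by auto
        have vi: "v ! (a - 1) = y (a - 1)" "v ! (b - 1) = y (b - 1)" using i unfolding v_def by auto
        have d1: "dist (real a) (real b) = 1 \<longleftrightarrow> (a - 1 + 1 = b - 1 \<or> b - 1 + 1 = a - 1)"
          using i by (auto simp: dist_real_def abs_if)
        have d2: "dist (real a) (real b) > 1 \<longleftrightarrow> \<not> (a - 1 + 1 = b - 1 \<or> b - 1 + 1 = a - 1)"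
          using i False by (auto simp: dist_real_def abs_if)
        have "adj (induced G T) (\<phi> a) (\<phi> b) = adj G (p (a - 1)) (p (b - 1))"
          using inT unfolding induced_def adj_def \<phi>_def by auto
        also have "\<dots> = (((a - 1 + 1 = b - 1 \<or> b - 1 + 1 = a - 1) \<and> \<not> H (v!(a-1)) (v!(b-1))) \<or>
                               (\<not>(a - 1 + 1 = b - 1 \<or> b - 1 + 1 = a - 1) \<and> H (v!(a-1)) (v!(b-1))))"
          using G(4) i by blast
        also have "\<dots> = adj (GwH (\<lambda>i. y (i - 1)) H U) a b"
          unfolding GwH_def adj_def using ab False vi d1 d2 by auto
        finally show ?thesis by simp
      qed
    qed
  qed
  then have "graph_iso (induced G T) G0" using U(4) graph_iso_sym graph_iso_trans by blast
  then show "G0 \<in> X" using her indX U(1) unfolding hereditary_def by blast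
qed


primrec ball :: "(nat \<Rightarrow> nat \<Rightarrow> bool) \<Rightarrow> nat \<Rightarrow> nat \<Rightarrow> nat set" where
  "ball R x 0 = {x}"
| "ball R x (Suc r) = ball R x r \<union> {y. \<exists>z\<in>ball R x r. R z y}"

lemma ball_mono: "i \<le> j \<Longrightarrow> ball R x i \<subseteq> ball R x j"
  by (induction j) (auto simp: le_Suc_eq)

lemma ball_card:
  assumes fin: "\<And>z. finite {y. R z y}" and deg: "\<And>z. card {y. R z y} \<le> D"
  shows "finite (ball R x r) \<and> card (ball R x r) \<le> (D+1)^r"
proof (induction r)
  case 0 then show ?case by simp
next
  case (Suc r)
  have eq: "ball R x (Suc r) = ball R x r \<union> (\<Union>z\<in>ball R x r. {y. R z y})" by auto
  have f: "finite (ball R x (Suc r))" using Suc fin unfolding eq by auto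
  have "card (ball R x (Suc r)) \<le> card (ball R x r) + card (\<Union>z\<in>ball R x r. {y. R z y})"
    unfolding eq by (rule card_Un_le)
  also have "card (\<Union>z\<in>ball R x r. {y. R z y}) \<le> (\<Sum>z\<in>ball R x r. card {y. R z y})"
    using Suc by (intro card_UN_le) auto
  also have "\<dots> \<le> card (ball R x r) * D" using sum_bounded_above[of "ball R x r" "\<lambda>z. card {y. R z y}" D] deg
    by auto
  finally have "card (ball R x (Suc r)) \<le> card (ball R x r) * (D + 1)" by simp
  also have "\<dots> \<le> (D+1)^r * (D+1)" using Suc by (intro mult_le_mono1) simp
  finally show ?case using f by (simp only: power_Suc2)
qed

definition layer :: "(nat \<Rightarrow> nat \<Rightarrow> bool) \<Rightarrow> nat \<Rightarrow> nat \<Rightarrow> nat set" where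
  "layer R x k = (if k = 0 then {x} else ball R x k - ball R x (k - 1))"

lemma layer_path:
  assumes "y \<in> layer R x k"
  shows "\<exists>p. p k = y \<and> (\<forall>i\<le>k. p i \<in> layer R x i) \<and> (\<forall>i<k. R (p i) (p (Suc i)))"
  using assms
proof (induction k arbitrary: y)
  case 0 then show ?case by (intro exI[of _ "\<lambda>_. y"]) (auto simp: layer_def)
next
  case (Suc k)
  then have y: "y \<in> ball R x (Suc k)" "y \<notin> ball R x k" by (auto simp: layer_def)
  then obtain z where z: "z \<in> ball R x k" "R z y" by auto
  have "z \<in> layer R x k"
  proof (cases k)
    case 0 then show ?thesis using z by (simp add: layer_def)
  next
    case (Suc k')
    have "z \<notin> ball R x k'" using z y Suc by auto
    then show ?thesis using z Suc by (simp add: layer_def)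
  qed
  from Suc.IH[OF this] obtain p where p: "p k = z" "\<forall>i\<le>k. p i \<in> layer R x i" "\<forall>i<k. R (p i) (p (Suc i))"
    by blast
  show ?case
    by (rule exI[of _ "p(Suc k := y)"]) (use p Suc.prems z in \<open>auto simp: le_Suc_eq less_Suc_eq\<close>)
qed

lemma layer_sub: "layer R x i \<subseteq> ball R x i"
  by (auto simp: layer_def)

lemma layer_disj: assumes "i < j" "y \<in> layer R x i" shows "y \<notin> layer R x j"
proof -
  have "i \<le> j - 1" using assms(1) by simp
  then have "y \<in> ball R x (j - 1)" using ball_mono[of i "j - 1" R x] layer_sub[of R x i] assms(2) by blast
  then show ?thesis using assms(1) by (auto simp: layer_def)
qed

lemma layer_nonadj:
  assumes "i + 1 < j" "p i \<in> layer R x i" "p j \<in> layer R x j"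
  shows "\<not> R (p i) (p j)"
proof
  assume r: "R (p i) (p j)"
  have "p i \<in> ball R x i" using assms(2) layer_sub by fastforce
  then have "p j \<in> ball R x (Suc i)" using r by auto
  moreover have "ball R x (Suc i) \<subseteq> ball R x (j - 1)" using assms(1) by (intro ball_mono) simp
  ultimately have "p j \<in> ball R x (j - 1)" by blast
  then show False using assms by (auto simp: layer_def)
qed

lemma ball_closed:
  assumes "layer R x (Suc N) = {}" "R\<^sup>*\<^sup>* x y"
  shows "y \<in> ball R x N"
  using assms(2)
proof (induction rule: rtranclp_induct)
  case base then show ?case using ball_mono[of 0 N R x] by auto
next
  case (step y z)
  then have "z \<in> ball R x (Suc N)" by auto
  then show ?case using assms(1) by (auto simp: layer_def)
qed


lemma asym_key:
  fixes K C a :: real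
  assumes "a > 0" "C > 0"
  shows "\<forall>\<^sub>F n in sequentially. K * C ^ n < real n powr (a * real n)"
proof -
  have e1: "\<forall>\<^sub>F n in sequentially. real n \<ge> (2 * C) powr (1 / a)"
  proof -
    obtain m :: nat where "(2 * C) powr (1 / a) \<le> real m" using real_arch_simple by blast
    then show ?thesis by (intro eventually_sequentiallyI[of m]) auto
  qed
  have e2: "\<forall>\<^sub>F n in sequentially. K < 2 ^ n"
  proof -
    obtain m where "K < 2 ^ m" using real_arch_pow[of 2 K] by auto
    then show ?thesis
      by (intro eventually_sequentiallyI[of m]) (smt (verit) one_le_numeral power_increasing)
  qed
  have e3: "\<forall>\<^sub>F n in sequentially. n \<ge> 1" by (rule eventually_ge_at_top)
  show ?thesis using e1 e2 e3
  proof eventually_elim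
    case (elim n)
    have n0: "real n > 0" using elim by simp
    have "2 * C = ((2 * C) powr (1 / a)) powr a" using assms by (simp add: powr_powr)
    also have "\<dots> \<le> real n powr a" using elim assms by (intro powr_mono2) auto
    finally have b: "2 * C \<le> real n powr a" .
    have "K * C ^ n < 2 ^ n * C ^ n" using elim assms by (intro mult_strict_right_mono) auto
    also have "\<dots> = (2 * C) ^ n" by (simp add: power_mult_distrib)
    also have "\<dots> \<le> (real n powr a) ^ n" using b assms by (intro power_mono) auto
    also have "\<dots> = real n powr (a * real n)" using n0 by (simp add: powr_realpow[symmetric] powr_powr)
    finally show ?case .
  qed
qed


lemma card_idem:
  fixes V :: "nat set" and s :: nat
  assumes fV: "finite V" and s: "s > 0" and n1: "card V \<ge> 1"
  shows "real (card {f \<in> V \<rightarrow>\<^sub>E V. (\<forall>x\<in>V. f (f x) = f x) \<and> (\<forall>x\<in>V. card {z\<in>V. f z = f x} \<le> s)})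
           \<le> 2 ^ card V * real (card V) powr (real (card V) - real (card V) / real s)"
proof -
  define n where "n = card V"
  define Fs where "Fs = {f \<in> V \<rightarrow>\<^sub>E V. (\<forall>x\<in>V. f (f x) = f x) \<and> (\<forall>x\<in>V. card {z\<in>V. f z = f x} \<le> s)}"
  define Ms where "Ms = {M. M \<subseteq> V \<and> n \<le> s * card M}"
  define FM where "FM M = (\<Pi>\<^sub>E x\<in>V. if x \<in> M then {x} else M)" for M
  define B where "B = real n powr (real n - real n / real s)"
  have sub: "Fs \<subseteq> (\<Union>M\<in>Ms. FM M)"
  proof
    fix f assume f: "f \<in> Fs"
    define M where "M = f ` V"
    have fV': "\<forall>x\<in>V. f x \<in> V" "f \<in> extensional V" using f unfolding Fs_def by (auto simp: PiE_def)
    have MV: "M \<subseteq> V" using fV' unfolding M_def by auto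
    have "V = (\<Union>m\<in>M. {z\<in>V. f z = m})" unfolding M_def by auto
    then have "n \<le> (\<Sum>m\<in>M. card {z\<in>V. f z = m})"
      unfolding n_def by (metis card_UN_le fV finite_imageI M_def)
    also have "\<dots> \<le> (\<Sum>m\<in>M. s)"
      using f unfolding Fs_def M_def by (intro sum_mono) auto
    finally have "n \<le> s * card M" by (simp add: mult.commute)
    then have "M \<in> Ms" using MV unfolding Ms_def by auto
    moreover have "f \<in> FM M" unfolding FM_def
    proof (rule PiE_I)
      fix x assume x: "x \<in> V"
      show "f x \<in> (if x \<in> M then {x} else M)"
      proof (cases "x \<in> M")
        case True
        then obtain z where "z \<in> V" "x = f z" unfolding M_def by auto
        then have "f x = x" using f unfolding Fs_def by auto
        then show ?thesis using True by simp
      next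
        case False then show ?thesis using x unfolding M_def by auto
      qed
    next
      fix x assume "x \<notin> V" then show "f x = undefined" using fV'(2) by (simp add: extensional_def)
    qed
    ultimately show "f \<in> (\<Union>M\<in>Ms. FM M)" by blast
  qed
  have finMs: "finite Ms" using fV unfolding Ms_def by auto
  have cardFM: "real (card (FM M)) \<le> B" if M: "M \<in> Ms" for M
  proof -
    have MV: "M \<subseteq> V" and nM: "n \<le> s * card M" using M unfolding Ms_def by auto
    have "card (FM M) = (\<Prod>x\<in>V. card (if x \<in> M then {x} else M))"
      unfolding FM_def using fV by (rule card_PiE)
    also have "\<dots> = (\<Prod>x\<in>V. if x \<in> M then 1 else card M)"
      by (intro prod.cong) auto
    also have "\<dots> = card M ^ card (V - M)"
      using fV by (simp add: prod.If_cases Diff_eq)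
    finally have c: "card (FM M) = card M ^ card (V - M)" .
    have cVM: "card (V - M) = n - card M" using MV fV unfolding n_def by (simp add: card_Diff_subset finite_subset)
    have cM: "card M \<le> n" using MV fV unfolding n_def by (simp add: card_mono)
    have "real (card (FM M)) = real (card M) ^ (n - card M)" using c cVM by simp
    also have "\<dots> \<le> real n ^ (n - card M)" using cM by (intro power_mono) auto
    also have "\<dots> = real n powr real (n - card M)" using n1 unfolding n_def by (simp add: powr_realpow)
    also have "\<dots> \<le> B" unfolding B_def
    proof (rule powr_mono)
      have "real n \<le> real s * real (card M)" using nM by (metis of_nat_le_iff of_nat_mult)
      then have "real n / real s \<le> real (card M)" using s by (simp add: divide_le_eq mult.commute)
      then show "real (n - card M) \<le> real n - real n / real s" using cM by (simp add: of_nat_diff)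
      show "1 \<le> real n" using n1 unfolding n_def by simp
    qed
    finally show ?thesis .
  qed
  have "card Fs \<le> card (\<Union>M\<in>Ms. FM M)"
    using sub finMs fV unfolding FM_def Ms_def by (intro card_mono) (auto intro!: finite_PiE dest: finite_subset)
  also have "\<dots> \<le> (\<Sum>M\<in>Ms. card (FM M))" using finMs by (rule card_UN_le)
  finally have "real (card Fs) \<le> (\<Sum>M\<in>Ms. real (card (FM M)))" by (metis of_nat_le_iff of_nat_sum)
  also have "\<dots> \<le> (\<Sum>M\<in>Ms. B)" using cardFM by (intro sum_mono) auto
  also have "\<dots> = real (card Ms) * B" by simp
  also have "\<dots> \<le> 2 ^ n * B"
  proof (rule mult_right_mono)
    have "card Ms \<le> card (Pow V)" using fV unfolding Ms_def by (intro card_mono) auto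
    then show "real (card Ms) \<le> 2 ^ n" using fV unfolding n_def by (simp add: card_Pow)
    show "0 \<le> B" unfolding B_def by simp
  qed
  finally show ?thesis unfolding Fs_def B_def n_def .
qed


definition rk :: "nat set \<Rightarrow> nat \<Rightarrow> nat" where
  "rk B y = card {z\<in>B. z < y}"

lemma rk_less: assumes "finite B" "y \<in> B" shows "rk B y < card B"
proof -
  have "{z\<in>B. z < y} \<subset> B" using assms by auto
  then show ?thesis unfolding rk_def using psubset_card_mono[OF assms(1)] by blast
qed

lemma rk_inj: assumes "finite B" shows "inj_on (rk B) B"
proof -
  have lt: "rk B y < rk B y'" if "y \<in> B" "y' \<in> B" "y < y'" for y y'
  proof -
    have "{z\<in>B. z < y} \<subset> {z\<in>B. z < y'}" using that by auto
    then show ?thesis unfolding rk_def using assms by (intro psubset_card_mono) auto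
  qed
  show ?thesis
  proof
    fix y y' assume "y \<in> B" "y' \<in> B" "rk B y = rk B y'"
    then show "y = y'" using lt[of y y'] lt[of y' y] by (metis less_irrefl linorder_neqE_nat)
  qed
qed

definition dec :: "nat \<Rightarrow> (nat \<Rightarrow> bool \<times> nat \<times> nat set \<times> nat set) \<Rightarrow> (nat \<Rightarrow> nat \<Rightarrow> bool)
   \<Rightarrow> (nat \<Rightarrow> nat) \<Rightarrow> nat \<Rightarrow> nat \<Rightarrow> bool" where
  "dec n \<phi> H f x y = (x \<in> {1..n} \<and> y \<in> {1..n} \<and> x \<noteq> y \<and>
     (if y \<in> {z\<in>{1..n}. fst (\<phi> z)} then rk {z\<in>{1..n}. fst (\<phi> z)} y \<in> snd (snd (snd (\<phi> x)))
      else if x \<in> {z\<in>{1..n}. fst (\<phi> z)} then rk {z\<in>{1..n}. fst (\<phi> z)} x \<in> snd (snd (snd (\<phi> y)))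
      else (H (fst (snd (\<phi> x))) (fst (snd (\<phi> y))) \<noteq>
             (f x = f y \<and> rk {z\<in>{1..n}. f z = f x} y \<in> fst (snd (snd (\<phi> x)))))))"

lemma dec_cong:
  assumes "\<forall>x\<in>{1..n}. \<phi> x = \<phi>' x" "\<forall>x\<in>{1..n}. f x = f' x"
  shows "dec n \<phi> H f = dec n \<phi>' H f'"
proof -
  have R: "{z\<in>{1..n}. fst (\<phi> z)} = {z\<in>{1..n}. fst (\<phi>' z)}" using assms by auto
  have B: "x \<in> {1..n} \<Longrightarrow> {z\<in>{1..n}. f z = f x} = {z\<in>{1..n}. f' z = f' x}" for x using assms by auto
  show ?thesis
    apply (intro ext)
    unfolding dec_def R
    using assms B by (auto simp del: atLeastAtMost_iff)
qed

definition Hsym :: "nat \<Rightarrow> (nat \<Rightarrow> nat \<Rightarrow> bool) \<Rightarrow> bool" where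
  "Hsym l H \<longleftrightarrow> (\<forall>x y. H x y \<longrightarrow> x < l \<and> y < l) \<and> (\<forall>x y. H x y = H y x)"

lemma finite_Hset: "finite {H :: nat \<Rightarrow> nat \<Rightarrow> bool. \<forall>x y. H x y \<longrightarrow> x < l \<and> y < l}"
proof -
  have "{H :: nat \<Rightarrow> nat \<Rightarrow> bool. \<forall>x y. H x y \<longrightarrow> x < l \<and> y < l}
     \<subseteq> (\<lambda>R x y. (x, y) \<in> R) ` Pow ({..<l} \<times> {..<l})"
  proof
    fix H :: "nat \<Rightarrow> nat \<Rightarrow> bool" assume "H \<in> {H. \<forall>x y. H x y \<longrightarrow> x < l \<and> y < l}"
    then have "{(x,y). H x y} \<in> Pow ({..<l} \<times> {..<l})" "H = (\<lambda>x y. (x, y) \<in> {(x,y). H x y})" by auto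
    then show "H \<in> (\<lambda>R x y. (x, y) \<in> R) ` Pow ({..<l} \<times> {..<l})" by blast
  qed
  then show ?thesis by (rule finite_subset) auto
qed

lemma Delta_le_sym: "Delta_le G A B d = Delta_le G B A d"
  unfolding Delta_le_def by auto

locale gstr =
  fixes X :: "graph set" and l d c N n :: nat and E :: "nat \<Rightarrow> nat \<Rightarrow> bool"
    and S :: "nat set" and P :: "nat set set"
  assumes her: "hereditary X" and GX: "({1..n}, E) \<in> X"
    and SV: "S \<subseteq> {1..n}" and Sc: "card ({1..n} - S) < c"
    and ldp: "ld_partition (induced ({1..n}, E) S) l d P"
    and nolong: "\<forall>H v. Hsym l H \<longrightarrow> length v = Suc (Suc N) \<longrightarrow> set v \<subseteq> {..<l} \<longrightarrow> \<not> realw X H v"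
begin

abbreviation "V \<equiv> {1..n::nat}"
definition "G' = induced ({1..n}, E) S"

lemma wf: "wf_graph ({1..n}, E)" using her GX unfolding hereditary_def by blast
lemma E_V: "E x y \<Longrightarrow> x \<in> V \<and> y \<in> V" using wf unfolding wf_graph_def verts_def adj_def by auto
lemma E_sym: "E x y = E y x" using wf unfolding wf_graph_def verts_def adj_def by auto
lemma E_irr: "\<not> E x x" using wf unfolding wf_graph_def verts_def adj_def by auto

lemma vG': "verts G' = S" using SV unfolding G'_def induced_def verts_def by auto
lemma aG': "adj G' x y = (x \<in> S \<and> y \<in> S \<and> E x y)" unfolding G'_def induced_def adj_def by auto
lemma finS: "finite S" using SV finite_subset by blast

lemma PU: "\<Union>P = S" and Pne: "{} \<notin> P" and Pdisj: "\<And>A B. A \<in> P \<Longrightarrow> B \<in> P \<Longrightarrow> A \<noteq> B \<Longrightarrow> A \<inter> B = {}"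
  and Pcard: "card P \<le> l"
  and Pdelta: "\<And>A B. A \<in> P \<Longrightarrow> B \<in> P \<Longrightarrow> Delta_le G' A B d \<or> coDelta_le G' A B d"
  using ldp vG' unfolding ld_partition_def G'_def[symmetric] by auto

lemma finP: "finite P"
proof -
  have "P \<subseteq> Pow S" using PU by auto
  then show ?thesis using finS by (meson finite_Pow_iff finite_subset)
qed

definition "e = (SOME h. bij_betw h P {0..<card P})"
lemma e_bij: "bij_betw e P {0..<card P}"
  unfolding e_def using ex_bij_betw_finite_nat[OF finP] by (rule someI_ex)
lemma e_inj: "A \<in> P \<Longrightarrow> B \<in> P \<Longrightarrow> e A = e B \<Longrightarrow> A = B"
  using e_bij unfolding bij_betw_def inj_on_def by blast
lemma e_less: "A \<in> P \<Longrightarrow> e A < l"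
  using e_bij Pcard unfolding bij_betw_def by (metis atLeastLessThan_iff image_eqI less_le_trans)

definition "bag x = (THE A. A \<in> P \<and> x \<in> A)"
lemma bag_eq: assumes "A \<in> P" "x \<in> A" shows "bag x = A"
  unfolding bag_def
proof (rule the_equality)
  show "A \<in> P \<and> x \<in> A" using assms by simp
  fix B assume "B \<in> P \<and> x \<in> B" then show "B = A" using assms Pdisj by blast
qed
lemma bag: assumes "x \<in> S" shows "bag x \<in> P" "x \<in> bag x"
proof -
  obtain A where "A \<in> P" "x \<in> A" using assms PU by blast
  then show "bag x \<in> P" "x \<in> bag x" using bag_eq by auto
qed

definition "b x = e (bag x)"
lemma b_less: "x \<in> S \<Longrightarrow> b x < l" unfolding b_def using bag e_less by blast

definition "Hg a a' = (\<exists>A\<in>P. \<exists>B\<in>P. e A = a \<and> e B = a' \<and> \<not> Delta_le G' A B d)"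
lemma Hg_e: "A \<in> P \<Longrightarrow> B \<in> P \<Longrightarrow> Hg (e A) (e B) = (\<not> Delta_le G' A B d)"
  unfolding Hg_def using e_inj by blast
lemma Hg_sym: "Hsym l Hg"
proof -
  have 1: "Hg x y \<Longrightarrow> x < l \<and> y < l" for x y unfolding Hg_def using e_less by blast
  have 2: "Hg x y \<Longrightarrow> Hg y x" for x y unfolding Hg_def using Delta_le_sym by metis
  show ?thesis unfolding Hsym_def using 1 2 by blast
qed

definition "sp x y = (x \<in> S \<and> y \<in> S \<and> x \<noteq> y \<and> (E x y \<noteq> Hg (b x) (b y)))"
lemma sp_sym: "sp x y = sp y x"
  unfolding sp_def using E_sym Hg_sym unfolding Hsym_def by metis
lemma sp_S: "sp x y \<Longrightarrow> x \<in> S \<and> y \<in> S" unfolding sp_def by auto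
lemma sp_fin: "finite {y. sp x y}" using finS sp_S by (metis (no_types, lifting) finite_subset mem_Collect_eq subsetI)

lemma sp_bag: assumes "x \<in> S" "B \<in> P" shows "card {y\<in>B. sp x y} \<le> d"
proof -
  define A where "A = bag x"
  have A: "A \<in> P" "x \<in> A" using bag assms unfolding A_def by auto
  have bB: "y \<in> B \<Longrightarrow> b y = e B" for y unfolding b_def using bag_eq assms by auto
  have bx: "b x = e A" unfolding b_def A_def by simp
  have finN: "finite (nbhd G' x \<inter> B)" "finite (conbhd G' x \<inter> B)"
    using finS vG' unfolding nbhd_def conbhd_def by auto
  show ?thesis
  proof (cases "Delta_le G' A B d")
    case True
    then have "card (nbhd G' x \<inter> B) \<le> d" using A unfolding Delta_le_def by auto
    moreover have "{y\<in>B. sp x y} \<subseteq> nbhd G' x \<inter> B"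
      using True bB bx Hg_e[OF A(1) assms(2)] unfolding sp_def nbhd_def vG' aG' by auto
    ultimately show ?thesis using card_mono[OF finN(1)] le_trans by blast
  next
    case False
    then have "coDelta_le G' A B d" using Pdelta A(1) assms(2) by blast
    then have "card (conbhd G' x \<inter> B) \<le> d" using A unfolding coDelta_le_def by auto
    moreover have "{y\<in>B. sp x y} \<subseteq> conbhd G' x \<inter> B"
      using False bB bx Hg_e[OF A(1) assms(2)] unfolding sp_def conbhd_def nbhd_def vG' aG' by auto
    ultimately show ?thesis using card_mono[OF finN(2)] le_trans by blast
  qed
qed

lemma sp_deg: "card {y. sp x y} \<le> l * d"
proof (cases "x \<in> S")
  case False then show ?thesis unfolding sp_def by simp
next
  case True
  have "{y. sp x y} = (\<Union>B\<in>P. {y\<in>B. sp x y})" using PU sp_S by auto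
  then have "card {y. sp x y} \<le> (\<Sum>B\<in>P. card {y\<in>B. sp x y})" using card_UN_le[OF finP] by metis
  also have "\<dots> \<le> (\<Sum>B\<in>P. d)" using sp_bag True by (intro sum_mono) auto
  also have "\<dots> = card P * d" by simp
  also have "\<dots> \<le> l * d" using Pcard by simp
  finally show ?thesis .
qed

lemma ball_S: "x \<in> S \<Longrightarrow> ball sp x k \<subseteq> S"
  by (induction k) (auto dest: sp_S)

lemma no_layer: assumes x: "x \<in> S" shows "layer sp x (Suc N) = {}"
proof (rule ccontr)
  assume "layer sp x (Suc N) \<noteq> {}"
  then obtain y where "y \<in> layer sp x (Suc N)" by blast
  from layer_path[OF this] obtain p where p: "\<forall>i\<le>Suc N. p i \<in> layer sp x i" "\<forall>i<Suc N. sp (p i) (p (Suc i))"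
    by blast
  have pS: "i \<le> Suc N \<Longrightarrow> p i \<in> S" for i using p(1) layer_sub ball_S[OF x] by blast
  define v where "v = map (\<lambda>i. b (p i)) [0..<Suc (Suc N)]"
  have "realw X Hg v" unfolding realw_def
  proof (intro bexI[OF _ GX] exI[of _ p] conjI)
    show "inj_on p {..<length v}"
    proof
      fix i j assume ij: "i \<in> {..<length v}" "j \<in> {..<length v}" "p i = p j"
      then have "i \<le> Suc N" "j \<le> Suc N" unfolding v_def by auto
      then show "i = j" using ij(3) p(1) layer_disj by (metis linorder_neqE_nat)
    qed
    show "p ` {..<length v} \<subseteq> verts ({1..n}, E)" using pS SV unfolding v_def verts_def by auto
    show "\<forall>i<length v. \<forall>j<length v. i \<noteq> j \<longrightarrow>
        (adj ({1..n}, E) (p i) (p j) \<longleftrightarrow> ((i+1 = j \<or> j+1 = i) \<and> \<not> Hg (v!i) (v!j)) \<or>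
                               (\<not>(i+1 = j \<or> j+1 = i) \<and> Hg (v!i) (v!j)))"
    proof (intro allI impI)
      fix i j assume ij: "i < length v" "j < length v" "i \<noteq> j"
      then have ij': "i \<le> Suc N" "j \<le> Suc N" unfolding v_def by auto
      have vv: "v ! i = b (p i)" "v ! j = b (p j)" using ij unfolding v_def by (auto simp del: upt_Suc)
      have ne: "p i \<noteq> p j" using ij(3) ij' p(1) layer_disj by (metis linorder_neqE_nat)
      show "(adj ({1..n}, E) (p i) (p j) \<longleftrightarrow> ((i+1 = j \<or> j+1 = i) \<and> \<not> Hg (v!i) (v!j)) \<or>
                               (\<not>(i+1 = j \<or> j+1 = i) \<and> Hg (v!i) (v!j)))"
      proof (cases "i+1 = j \<or> j+1 = i")
        case True
        then have "sp (p i) (p j)" using p(2) ij' sp_sym by auto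
        then show ?thesis using True vv unfolding sp_def adj_def by auto
      next
        case False
        then have "i + 1 < j \<or> j + 1 < i" using ij(3) by auto
        then have "\<not> sp (p i) (p j)" using layer_nonadj[of i j p sp x] layer_nonadj[of j i p sp x] p(1) ij' sp_sym by auto
        then show ?thesis using False vv ne pS[OF ij'(1)] pS[OF ij'(2)] unfolding sp_def adj_def by auto
      qed
    qed
  qed
  moreover have "length v = Suc (Suc N)" unfolding v_def by simp
  moreover have "set v \<subseteq> {..<l}" unfolding v_def using pS b_less by auto
  ultimately show False using nolong Hg_sym by blast
qed

end


context gstr begin

definition "s = (l * d + 1) ^ N"
lemma s_pos: "s > 0" unfolding s_def by simp

definition "cmpn x = {y. sp\<^sup>*\<^sup>* x y}"

lemma equiv_sp: "equivp sp\<^sup>*\<^sup>*"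
  by (rule equivp_rtranclp) (auto simp: symp_def sp_sym)

lemma cmpn_self: "x \<in> cmpn x" unfolding cmpn_def by simp

lemma cmpn_eq: "y \<in> cmpn x \<Longrightarrow> cmpn y = cmpn x"
  using equiv_sp unfolding cmpn_def equivp_def by (metis mem_Collect_eq)

lemma cmpn_S: assumes "x \<in> S" shows "cmpn x \<subseteq> S"
proof
  fix y assume "y \<in> cmpn x" then have "sp\<^sup>*\<^sup>* x y" unfolding cmpn_def by simp
  then show "y \<in> S" by (induction rule: rtranclp_induct) (use assms sp_S in auto)
qed

lemma cmpn_ball: assumes "x \<in> S" shows "cmpn x \<subseteq> ball sp x N"
  using ball_closed[OF no_layer[OF assms]] unfolding cmpn_def by auto

lemma cmpn_card: assumes "x \<in> S" shows "finite (cmpn x)" "card (cmpn x) \<le> s"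
proof -
  have b: "finite (ball sp x N) \<and> card (ball sp x N) \<le> (l * d + 1) ^ N"
    using ball_card[of sp "l * d"] sp_fin sp_deg by blast
  show "finite (cmpn x)" using b cmpn_ball[OF assms] finite_subset by blast
  have "card (cmpn x) \<le> card (ball sp x N)" using b cmpn_ball[OF assms] by (intro card_mono) auto
  then show "card (cmpn x) \<le> s" unfolding s_def using b by linarith
qed

definition "f x = (if x \<in> S then Min (cmpn x) else x)"

lemma f_comp: assumes "x \<in> S" shows "f x \<in> cmpn x"
  unfolding f_def using assms cmpn_card(1)[OF assms] cmpn_self by (auto intro!: Min_in)

lemma f_S: "x \<in> S \<Longrightarrow> f x \<in> S" using f_comp cmpn_S by blast
lemma f_V: assumes "x \<in> V" shows "f x \<in> V"
proof (cases "x \<in> S")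
  case True then show ?thesis using f_S SV by blast
next
  case False then show ?thesis using assms unfolding f_def by simp
qed

lemma f_idem: "f (f x) = f x"
proof (cases "x \<in> S")
  case True
  then have "cmpn (f x) = cmpn x" using f_comp cmpn_eq by blast
  then show ?thesis using True f_S unfolding f_def by simp
next
  case False then show ?thesis unfolding f_def by simp
qed

lemma fiber_sub: assumes x: "x \<in> V"
  shows "{z\<in>V. f z = f x} \<subseteq> (if x \<in> S then cmpn x else {x})"
proof
  fix z assume z: "z \<in> {z\<in>V. f z = f x}"
  show "z \<in> (if x \<in> S then cmpn x else {x})"
  proof (cases "z \<in> S")
    case True
    then have fz: "f z \<in> cmpn z" "f z \<in> S" using f_comp f_S by auto
    show ?thesis
    proof (cases "x \<in> S")
      case True
      then have "f x \<in> cmpn x" by (rule f_comp)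
      then have "cmpn (f x) = cmpn x" by (rule cmpn_eq)
      moreover have "cmpn (f z) = cmpn z" using fz cmpn_eq by blast
      ultimately have "cmpn z = cmpn x" using z by auto
      then show ?thesis using True cmpn_self by auto
    next
      case False then show ?thesis using z fz unfolding f_def by auto
    qed
  next
    case False
    then have "f z = z" unfolding f_def by simp
    show ?thesis
    proof (cases "x \<in> S")
      case True
      then have "f x \<in> S" by (rule f_S)
      then show ?thesis using z \<open>f z = z\<close> False by auto
    next
      case xS: False
      then have "f x = x" unfolding f_def by simp
      then show ?thesis using z \<open>f z = z\<close> xS by auto
    qed
  qed
qed

lemma fiber_card: assumes "x \<in> V" shows "finite {z\<in>V. f z = f x}" "card {z\<in>V. f z = f x} \<le> s"
proof -
  show "finite {z\<in>V. f z = f x}" by simp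
  show "card {z\<in>V. f z = f x} \<le> s"
  proof (cases "x \<in> S")
    case True
    have "{z\<in>V. f z = f x} \<subseteq> cmpn x" using fiber_sub[OF assms] True by simp
    then have "card {z\<in>V. f z = f x} \<le> card (cmpn x)" by (rule card_mono[OF cmpn_card(1)[OF True]])
    then show ?thesis using cmpn_card(2)[OF True] by linarith
  next
    case False
    have "{z\<in>V. f z = f x} \<subseteq> {x}" using fiber_sub[OF assms] False by simp
    then have "card {z\<in>V. f z = f x} \<le> card {x}" by (intro card_mono) auto
    then show ?thesis using s_pos by simp
  qed
qed

abbreviation "RR \<equiv> V - S"
definition "blk x = {z\<in>V. f z = f x}"

definition "phi x = (x \<notin> S, if x \<in> S then b x else 0,
    rk (blk x) ` {z\<in>blk x. sp x z}, rk RR ` {r\<in>RR. E x r})"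

lemma R_eq: "{z\<in>V. fst (phi z)} = RR" unfolding phi_def by auto

lemma E_dec: "E = dec n phi Hg f"
proof (intro ext)
  fix x y
  show "E x y = dec n phi Hg f x y"
  proof (cases "x \<in> V \<and> y \<in> V \<and> x \<noteq> y")
    case False
    have "\<not> E x y"
    proof
      assume "E x y" then show False using False E_V[of x y] E_irr[of x] by blast
    qed
    moreover have "\<not> dec n phi Hg f x y" using False unfolding dec_def by blast
    ultimately show ?thesis by simp
  next
    case True
    then have xy: "x \<in> V" "y \<in> V" "x \<noteq> y" by auto
    have finR: "finite RR" by simp
    show ?thesis
    proof (cases "y \<in> RR")
      case True
      have "dec n phi Hg f x y = (rk RR y \<in> rk RR ` {r\<in>RR. E x r})"
        unfolding dec_def R_eq using xy True by (simp add: phi_def)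
      also have "\<dots> = (y \<in> {r\<in>RR. E x r})" by (rule inj_on_image_mem_iff[OF rk_inj[OF finR] True]) auto
      also have "\<dots> = E x y" using True by simp
      finally show ?thesis by simp
    next
      case yS: False
      show ?thesis
      proof (cases "x \<in> RR")
        case True
        have "dec n phi Hg f x y = (rk RR x \<in> rk RR ` {r\<in>RR. E y r})"
          unfolding dec_def R_eq using xy True yS by (simp add: phi_def)
        also have "\<dots> = (x \<in> {r\<in>RR. E y r})" by (rule inj_on_image_mem_iff[OF rk_inj[OF finR] True]) auto
        also have "\<dots> = E y x" using True by simp
        finally show ?thesis using E_sym by simp
      next
        case False
        then have S: "x \<in> S" "y \<in> S" using xy yS by auto
        have finB: "finite (blk x)" unfolding blk_def by simp
        have spc: "(f x = f y \<and> rk (blk x) y \<in> rk (blk x) ` {z\<in>blk x. sp x z}) = sp x y"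
        proof
          assume "sp x y"
          then have "y \<in> cmpn x" unfolding cmpn_def by auto
          then have "cmpn y = cmpn x" by (rule cmpn_eq)
          then have fe: "f x = f y" using S unfolding f_def by simp
          then have "y \<in> blk x" using xy unfolding blk_def by simp
          then show "f x = f y \<and> rk (blk x) y \<in> rk (blk x) ` {z\<in>blk x. sp x z}" using fe \<open>sp x y\<close> by auto
        next
          assume a: "f x = f y \<and> rk (blk x) y \<in> rk (blk x) ` {z\<in>blk x. sp x z}"
          then obtain z where z: "z \<in> blk x" "sp x z" "rk (blk x) z = rk (blk x) y" by auto
          have "y \<in> blk x" using a xy unfolding blk_def by simp
          then have "z = y" using rk_inj[OF finB] z unfolding inj_on_def by blast
          then show "sp x y" using z by simp
        qed
        have "dec n phi Hg f x y = (Hg (b x) (b y) \<noteq> (f x = f y \<and> rk (blk x) y \<in> rk (blk x) ` {z\<in>blk x. sp x z}))"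
          unfolding dec_def R_eq using xy S by (simp add: phi_def blk_def)
        also have "\<dots> = (Hg (b x) (b y) \<noteq> sp x y)" using spc by simp
        also have "\<dots> = E x y" using S xy unfolding sp_def by auto
        finally show ?thesis by simp
      qed
    qed
  qed
qed

definition "Ycode = (UNIV :: bool set) \<times> {..l} \<times> Pow {..<s} \<times> Pow {..<c}"

lemma phi_Y: "x \<in> V \<Longrightarrow> phi x \<in> Ycode"
proof -
  assume x: "x \<in> V"
  have "card (blk x) \<le> s" using fiber_card[OF x] unfolding blk_def by simp
  have 1: "rk (blk x) ` {z\<in>blk x. sp x z} \<subseteq> {..<s}"
  proof (rule image_subsetI)
    fix z assume "z \<in> {z\<in>blk x. sp x z}"
    then have "rk (blk x) z < card (blk x)" by (intro rk_less) (auto simp: blk_def)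
    then show "rk (blk x) z \<in> {..<s}" using \<open>card (blk x) \<le> s\<close> by simp
  qed
  have 2: "rk RR ` {r\<in>RR. E x r} \<subseteq> {..<c}"
  proof (rule image_subsetI)
    fix z assume "z \<in> {r\<in>RR. E x r}"
    then have "rk RR z < card RR" by (intro rk_less) auto
    then show "rk RR z \<in> {..<c}" using Sc by simp
  qed
  have 3: "(if x \<in> S then b x else 0) \<le> l" using b_less by (simp add: less_imp_le)
  show "phi x \<in> Ycode" unfolding Ycode_def phi_def using 1 2 3 by auto
qed

lemma code_mem:
  "E \<in> (\<lambda>(\<phi>, H, g). dec n \<phi> H g) `
      ((\<Pi>\<^sub>E x\<in>V. Ycode) \<times> {H. \<forall>x y. H x y \<longrightarrow> x < l \<and> y < l}
        \<times> {g \<in> V \<rightarrow>\<^sub>E V. (\<forall>x\<in>V. g (g x) = g x) \<and> (\<forall>x\<in>V. card {z\<in>V. g z = g x} \<le> s)})"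
proof -
  have "E = dec n (restrict phi V) Hg (restrict f V)"
    using E_dec dec_cong[of n phi "restrict phi V" f "restrict f V" Hg] by simp
  moreover have "restrict phi V \<in> (\<Pi>\<^sub>E x\<in>V. Ycode)" using phi_Y by auto
  moreover have "Hg \<in> {H. \<forall>x y. H x y \<longrightarrow> x < l \<and> y < l}" using Hg_sym unfolding Hsym_def by auto
  moreover have "restrict f V \<in> {g \<in> V \<rightarrow>\<^sub>E V. (\<forall>x\<in>V. g (g x) = g x) \<and> (\<forall>x\<in>V. card {z\<in>V. g z = g x} \<le> s)}"
  proof -
    have "\<forall>x\<in>V. restrict f V (restrict f V x) = restrict f V x" using f_V f_idem by auto
    moreover have "{z\<in>V. restrict f V z = restrict f V x} = {z\<in>V. f z = f x}" if "x \<in> V" for x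
      using that by auto
    ultimately show ?thesis using f_V fiber_card by auto
  qed
  ultimately have "E = dec n (restrict phi V) Hg (restrict f V)"
    "(restrict phi V, Hg, restrict f V) \<in> ((\<Pi>\<^sub>E x\<in>V. Ycode) \<times> {H. \<forall>x y. H x y \<longrightarrow> x < l \<and> y < l}
        \<times> {g \<in> V \<rightarrow>\<^sub>E V. (\<forall>x\<in>V. g (g x) = g x) \<and> (\<forall>x\<in>V. card {z\<in>V. g z = g x} \<le> s)})"
    by blast+
  then show ?thesis by (intro image_eqI[where x="(restrict phi V, Hg, restrict f V)"]) simp_all
qed

lemma code_mem':
  "E \<in> (\<lambda>(\<phi>, H, g). dec n \<phi> H g) `
      ((\<Pi>\<^sub>E x\<in>{1..n}. (UNIV :: bool set) \<times> {..l} \<times> Pow {..<(l * d + 1) ^ N} \<times> Pow {..<c})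
        \<times> {H. \<forall>x y. H x y \<longrightarrow> x < l \<and> y < l}
        \<times> {g \<in> {1..n} \<rightarrow>\<^sub>E {1..n}. (\<forall>x\<in>{1..n}. g (g x) = g x) \<and>
             (\<forall>x\<in>{1..n}. card {z\<in>{1..n}. g z = g x} \<le> (l * d + 1) ^ N)})"
  using code_mem unfolding s_def Ycode_def .

end


lemma speed_bound:
  fixes X :: "graph set"
  assumes her: "hereditary X"
    and hyp: "\<forall>G\<in>X. \<exists>S. S \<subseteq> verts G \<and> strong_ld_graph (induced G S) l d \<and> card (verts G - S) < c"
    and nolong: "\<forall>H v. Hsym l H \<longrightarrow> length v = Suc (Suc N) \<longrightarrow> set v \<subseteq> {..<l} \<longrightarrow> \<not> realw X H v"
    and n1: "n \<ge> 1"
  shows "real (speed X n) \<le> real (card ((UNIV :: bool set) \<times> {..l} \<times> Pow {..<(l * d + 1) ^ N} \<times> Pow {..<c})) ^ n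
            * real (card {H :: nat \<Rightarrow> nat \<Rightarrow> bool. \<forall>x y. H x y \<longrightarrow> x < l \<and> y < l})
            * (2 ^ n * real n powr (real n - real n / real ((l * d + 1) ^ N)))"
proof -
  define s where "s = (l * d + 1) ^ N"
  define Y where "Y = (UNIV :: bool set) \<times> {..l} \<times> Pow {..<s} \<times> Pow {..<c}"
  define Hs where "Hs = {H :: nat \<Rightarrow> nat \<Rightarrow> bool. \<forall>x y. H x y \<longrightarrow> x < l \<and> y < l}"
  define Fs where "Fs = {g \<in> {1..n} \<rightarrow>\<^sub>E {1..n}. (\<forall>x\<in>{1..n}. g (g x) = g x) \<and>
             (\<forall>x\<in>{1..n}. card {z\<in>{1..n}. g z = g x} \<le> s)}"
  define Codes where "Codes = (\<Pi>\<^sub>E x\<in>{1..n::nat}. Y) \<times> Hs \<times> Fs"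
  have sub: "{E. ({1..n}, E) \<in> X} \<subseteq> (\<lambda>(\<phi>, H, g). dec n \<phi> H g) ` Codes"
  proof
    fix E assume "E \<in> {E. ({1..n}, E) \<in> X}"
    then have GX: "({1..n}, E) \<in> X" by simp
    obtain S where S: "S \<subseteq> {1..n}" "strong_ld_graph (induced ({1..n}, E) S) l d" "card ({1..n} - S) < c"
      using hyp GX unfolding verts_def by fastforce
    obtain P where P: "ld_partition (induced ({1..n}, E) S) l d P"
      using S(2) unfolding strong_ld_graph_def by blast
    have "gstr X l d c N n E S P"
      by unfold_locales (use her GX S P nolong in auto)
    from gstr.code_mem'[OF this] show "E \<in> (\<lambda>(\<phi>, H, g). dec n \<phi> H g) ` Codes"
      unfolding Codes_def Y_def Hs_def Fs_def s_def .
  qed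
  have finY: "finite Y" unfolding Y_def by simp
  have finHs: "finite Hs" unfolding Hs_def by (rule finite_Hset)
  have finFs: "finite Fs" unfolding Fs_def
    by (rule finite_subset[of _ "{1..n} \<rightarrow>\<^sub>E {1..n}"]) (auto intro: finite_PiE)
  have finC: "finite Codes" unfolding Codes_def using finY finHs finFs by (auto intro: finite_PiE)
  have "speed X n \<le> card ((\<lambda>(\<phi>, H, g). dec n \<phi> H g) ` Codes)"
    unfolding speed_def using sub finC by (intro card_mono) auto
  also have "\<dots> \<le> card Codes" using finC by (rule card_image_le)
  also have "\<dots> = card Y ^ n * card Hs * card Fs"
    unfolding Codes_def using finY by (simp add: card_cartesian_product card_PiE)
  finally have "real (speed X n) \<le> real (card Y) ^ n * real (card Hs) * real (card Fs)"
    by (metis of_nat_le_iff of_nat_mult of_nat_power)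
  also have "\<dots> \<le> real (card Y) ^ n * real (card Hs) * (2 ^ n * real n powr (real n - real n / real s))"
  proof (rule mult_left_mono)
    have "real (card Fs) \<le> 2 ^ card {1..n} * real (card {1..n}) powr (real (card {1..n}) - real (card {1..n}) / real s)"
      unfolding Fs_def by (rule card_idem) (use n1 in \<open>auto simp: s_def\<close>)
    then show "real (card Fs) \<le> 2 ^ n * real n powr (real n - real n / real s)" by simp
  qed simp
  finally show ?thesis unfolding Y_def Hs_def s_def .
qed

lemma long_paths:
  fixes X :: "graph set"
  assumes her: "hereditary X" and ab: "above_bell X"
    and hyp: "\<forall>G\<in>X. \<exists>S. S \<subseteq> verts G \<and> strong_ld_graph (induced G S) l d \<and> card (verts G - S) < c"
  shows "\<exists>H v. Hsym l H \<and> length v = Suc (Suc N) \<and> set v \<subseteq> {..<l} \<and> realw X H v"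
proof (rule ccontr)
  assume "\<not> ?thesis"
  then have nolong: "\<forall>H v. Hsym l H \<longrightarrow> length v = Suc (Suc N) \<longrightarrow> set v \<subseteq> {..<l} \<longrightarrow> \<not> realw X H v"
    by blast
  define s where "s = (l * d + 1) ^ N"
  define Y where "Y = (UNIV :: bool set) \<times> {..l} \<times> Pow {..<s} \<times> Pow {..<c}"
  define Hs where "Hs = {H :: nat \<Rightarrow> nat \<Rightarrow> bool. \<forall>x y. H x y \<longrightarrow> x < l \<and> y < l}"
  define K where "K = real (card Hs)"
  define Cy where "Cy = real (card Y)"
  define a where "a = 1 / (2 * real s)"
  have s0: "s > 0" unfolding s_def by simp
  have a0: "a > 0" unfolding a_def using s0 by simp
  have Y0: "Cy > 0"
  proof -
    have "(True, 0, {}, {}) \<in> Y" unfolding Y_def by simp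
    moreover have "finite Y" unfolding Y_def by simp
    ultimately show ?thesis unfolding Cy_def using card_gt_0_iff by fastforce
  qed
  have e1: "\<forall>\<^sub>F n in sequentially. real (speed X n) \<ge> real n powr ((1 - a) * real n)"
    using ab a0 unfolding above_bell_def by blast
  have e2: "\<forall>\<^sub>F n in sequentially. K * (2 * Cy) ^ n < real n powr (a * real n)"
    using asym_key[OF a0, of "2 * Cy" K] Y0 by simp
  have e3: "\<forall>\<^sub>F n in sequentially. n \<ge> (1::nat)" by (rule eventually_ge_at_top)
  have "\<forall>\<^sub>F n in sequentially. False" using e1 e2 e3
  proof eventually_elim
    case (elim n)
    have n0: "real n > 0" using elim by simp
    have "real (speed X n) \<le> Cy ^ n * K * (2 ^ n * real n powr (real n - real n / real s))"
      using speed_bound[OF her hyp nolong elim(3)] unfolding Cy_def K_def Y_def Hs_def s_def .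
    also have "\<dots> = (K * (2 * Cy) ^ n) * real n powr (real n - real n / real s)"
      by (simp add: power_mult_distrib mult_ac)
    also have "\<dots> < real n powr (a * real n) * real n powr (real n - real n / real s)"
      using elim(2) n0 by (intro mult_strict_right_mono) auto
    also have "\<dots> = real n powr (a * real n + (real n - real n / real s))"
      by (simp add: powr_add)
    also have "a * real n + (real n - real n / real s) = (1 - a) * real n"
      unfolding a_def using s0 by (simp add: field_simps)
    finally show False using elim(1) by simp
  qed
  then show False by simp
qed

theorem main_result:
  fixes \<X> :: "graph set" and l d c :: nat
  assumes her: "hereditary \<X>" and ab: "above_bell \<X>"
    and hyp: "\<forall>G\<in>\<X>. \<exists>S. S \<subseteq> verts G \<and> strong_ld_graph (induced G S) l d
                     \<and> card (verts G - S) < c"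
  shows "\<exists>(w :: nat \<Rightarrow> nat) (A :: nat set) (H :: nat \<Rightarrow> nat \<Rightarrow> bool).
           finite A \<and> range w \<subseteq> A \<and> card A \<le> l
           \<and> (\<forall>x y. H x y \<longrightarrow> x \<in> A \<and> y \<in> A) \<and> (\<forall>x y. H x y \<longleftrightarrow> H y x)
           \<and> almost_periodic w
           \<and> P_class w H \<subseteq> \<X>"
proof -
  define L where "L H = {v. set v \<subseteq> {..<l} \<and> realw \<X> H v}" for H
  define HS where "HS = {H. Hsym l H}"
  have finHS: "finite HS"
    by (rule finite_subset[OF _ finite_Hset[of l]]) (auto simp: HS_def Hsym_def)
  have "\<exists>H. Hsym l H \<and> longw (L H)"
  proof (rule ccontr)
    assume "\<not> ?thesis"
    then have "\<forall>H\<in>HS. \<exists>m. \<forall>v\<in>L H. length v < m"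
      unfolding HS_def longw_def by (auto simp: not_le)
    then obtain bd where bd: "\<And>H v. H \<in> HS \<Longrightarrow> v \<in> L H \<Longrightarrow> length v < bd H" by metis
    define M where "M = Max (insert 0 (bd ` HS))"
    obtain H v where Hv: "Hsym l H" "length v = Suc (Suc M)" "set v \<subseteq> {..<l}" "realw \<X> H v"
      using long_paths[OF her ab hyp, of M] by blast
    have "H \<in> HS" "v \<in> L H" using Hv unfolding HS_def L_def by auto
    then have "length v < bd H" by (rule bd)
    moreover have "bd H \<le> M" unfolding M_def using finHS \<open>H \<in> HS\<close> by (intro Max_ge) auto
    ultimately show False using Hv(2) by simp
  qed
  then obtain H where H: "Hsym l H" "longw (L H)" by blast
  have "\<exists>y. facx y \<subseteq> L H \<and> range y \<subseteq> {..<l} \<and> almost_periodic (\<lambda>i. y (i - 1))"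
    by (rule almost_periodic_exists) (use H(2) fclosed_realw in \<open>auto simp: L_def\<close>)
  then obtain y where y: "facx y \<subseteq> L H" "range y \<subseteq> {..<l}" "almost_periodic (\<lambda>i. y (i - 1))" by blast
  have "P_class (\<lambda>i. y (i - 1)) H \<subseteq> \<X>"
    by (rule pclass_sub[OF her]) (use y(1) in \<open>auto simp: L_def\<close>)
  moreover have "range (\<lambda>i. y (i - 1)) \<subseteq> {..<l}" using y(2) by auto
  ultimately show ?thesis using H(1) y(3) unfolding Hsym_def
    by (intro exI[of _ "\<lambda>i. y (i - 1)"] exI[of _ "{..<l}"] exI[of _ H]) auto
qed

theorem theorem3p13:
  fixes \<X> :: "graph set" and l d c :: nat
  assumes "hereditary \<X>"
    and "above_bell \<X>"
    and "finite_distinguishing_number \<X>"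
    and "\<forall>G\<in>\<X>. \<exists>S. S \<subseteq> verts G \<and> strong_ld_graph (induced G S) l d
                     \<and> card (verts G - S) < c"
  shows "\<exists>(w :: nat \<Rightarrow> nat) (A :: nat set) (H :: nat \<Rightarrow> nat \<Rightarrow> bool).
           finite A \<and> range w \<subseteq> A \<and> card A \<le> l
           \<and> (\<forall>x y. H x y \<longrightarrow> x \<in> A \<and> y \<in> A) \<and> (\<forall>x y. H x y \<longleftrightarrow> H y x)
           \<and> almost_periodic w
           \<and> P_class w H \<subseteq> \<X>"
  using main_result[OF assms(1,2,4)] .

end
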